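(* Let $(D_i)_{i\in\mathbb N}$ be a sequence of nontrivial discrete groups, $G=\prod_{i\in\mathbb N}D_i$ with the product topology, and $H=\{g\in G:\{i:g(i)\neq e_{D_i}\}\text{ finite}\}$ with the topology induced from $G$. Then: (1) every sequence in $G$ converging to the neutral element $e$ is hyper-multipliable in $G$ (in particular hyper-converging); (2) every sequence in $H$ which is super-multipliable in $H$ is eventually neutral; (3) every sequence in $H$ which is hyper-multipliable in $H$ is eventually neutral.
   Context: $\prod_{k=1}^n a_k=a_1\cdots a_n$. A sequence $(g_n)$ in a topological group with neutral element $e$ is: eventually neutral if $\{n:g_n\ne e\}$ is finite; hyper-multipliable if for every integer sequence $(m_n)$, $\left(\prod_{k=1}^n g_k^{m_k}\right)_n$ converges in the group; super-multipliable if the same holds for all $(m_n)$ with values in $\{0,1\}$; hyper-converging if $g_n^{m_n}\to e$ for every integer sequence $(m_n)$. *)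

theory Defs
  imports "HOL-Analysis.Analysis" "HOL-Algebra.Group"
begin

definition ProdGrp :: "(nat \<Rightarrow> 'a monoid) \<Rightarrow> (nat \<Rightarrow> 'a) monoid" where
  "ProdGrp D = \<lparr> carrier = PiE UNIV (\<lambda>i. carrier (D i)),
                 mult = (\<lambda>f g. \<lambda>i. f i \<otimes>\<^bsub>D i\<^esub> g i),
                 one = (\<lambda>i. \<one>\<^bsub>D i\<^esub>) \<rparr>"

definition ProdTop :: "(nat \<Rightarrow> 'a monoid) \<Rightarrow> (nat \<Rightarrow> 'a) topology" where
  "ProdTop D = product_topology (\<lambda>i. discrete_topology (carrier (D i))) UNIV"

definition FinSupp :: "(nat \<Rightarrow> 'a monoid) \<Rightarrow> (nat \<Rightarrow> 'a) set" where
  "FinSupp D = {g \<in> carrier (ProdGrp D). finite {i. g i \<noteq> \<one>\<^bsub>D i\<^esub>}}"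

definition SumGrp :: "(nat \<Rightarrow> 'a monoid) \<Rightarrow> (nat \<Rightarrow> 'a) monoid" where
  "SumGrp D = (ProdGrp D)\<lparr>carrier := FinSupp D\<rparr>"

definition SumTop :: "(nat \<Rightarrow> 'a monoid) \<Rightarrow> (nat \<Rightarrow> 'a) topology" where
  "SumTop D = subtopology (ProdTop D) (FinSupp D)"

fun pprod :: "('b, 'c) monoid_scheme \<Rightarrow> (nat \<Rightarrow> 'b) \<Rightarrow> nat \<Rightarrow> 'b" where
  "pprod G a 0 = \<one>\<^bsub>G\<^esub>"
| "pprod G a (Suc n) = pprod G a n \<otimes>\<^bsub>G\<^esub> a n"

definition eventually_neutral :: "('b, 'c) monoid_scheme \<Rightarrow> (nat \<Rightarrow> 'b) \<Rightarrow> bool" where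
  "eventually_neutral G g \<longleftrightarrow> finite {n. g n \<noteq> \<one>\<^bsub>G\<^esub>}"

definition hyper_multipliable ::
  "('b, 'c) monoid_scheme \<Rightarrow> 'b topology \<Rightarrow> (nat \<Rightarrow> 'b) \<Rightarrow> bool" where
  "hyper_multipliable G X g \<longleftrightarrow>
     (\<forall>m :: nat \<Rightarrow> int. \<exists>l. limitin X (\<lambda>n. pprod G (\<lambda>k. g k [^]\<^bsub>G\<^esub> m k) n) l sequentially)"

definition super_multipliable ::
  "('b, 'c) monoid_scheme \<Rightarrow> 'b topology \<Rightarrow> (nat \<Rightarrow> 'b) \<Rightarrow> bool" where
  "super_multipliable G X g \<longleftrightarrow>
     (\<forall>m :: nat \<Rightarrow> int. (\<forall>k. m k \<in> {0, 1}) \<longrightarrow>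
        (\<exists>l. limitin X (\<lambda>n. pprod G (\<lambda>k. g k [^]\<^bsub>G\<^esub> m k) n) l sequentially))"

definition hyper_converging ::
  "('b, 'c) monoid_scheme \<Rightarrow> 'b topology \<Rightarrow> (nat \<Rightarrow> 'b) \<Rightarrow> bool" where
  "hyper_converging G X g \<longleftrightarrow>
     (\<forall>m :: nat \<Rightarrow> int. limitin X (\<lambda>n. g n [^]\<^bsub>G\<^esub> m n) \<one>\<^bsub>G\<^esub> sequentially)"

end

theory Submission
  imports Defs
begin

lemma limitin_discrete_iff:
  "limitin (discrete_topology U) f l F \<longleftrightarrow> l \<in> U \<and> eventually (\<lambda>x. f x = l) F"
proof
  assume h: "limitin (discrete_topology U) f l F"
  then have "l \<in> U" by (simp add: limitin_def)
  moreover have "eventually (\<lambda>x. f x \<in> {l}) F"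
  proof -
    have "openin (discrete_topology U) {l}" using \<open>l \<in> U\<close> by simp
    then show ?thesis using h unfolding limitin_def by blast
  qed
  ultimately show "l \<in> U \<and> eventually (\<lambda>x. f x = l) F" by simp
next
  assume "l \<in> U \<and> eventually (\<lambda>x. f x = l) F"
  then show "limitin (discrete_topology U) f l F"
    unfolding limitin_def by (auto elim: eventually_mono)
qed

lemma limitin_ProdTopD:
  "limitin (ProdTop D) f l F \<Longrightarrow>
     (\<forall>i. l i \<in> carrier (D i) \<and> eventually (\<lambda>n. f n i = l i) F)"
  unfolding ProdTop_def limitin_componentwise limitin_discrete_iff
  by (auto simp: topspace_product_topology)

lemma limitin_ProdTopI:
  "(\<And>n i. f n i \<in> carrier (D i)) \<Longrightarrow> (\<And>i. l i \<in> carrier (D i)) \<Longrightarrow>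
    (\<And>i. eventually (\<lambda>n. f n i = l i) F) \<Longrightarrow> limitin (ProdTop D) f l F"
proof -
  assume f: "\<And>n i. f n i \<in> carrier (D i)" and l: "\<And>i. l i \<in> carrier (D i)"
    and e: "\<And>i. eventually (\<lambda>n. f n i = l i) F"
  have "\<forall>n. f n \<in> topspace (product_topology (\<lambda>i. discrete_topology (carrier (D i))) UNIV)"
    using f by (simp add: PiE_iff)
  then show ?thesis
    unfolding ProdTop_def limitin_componentwise limitin_discrete_iff
    using l e by (simp add: always_eventually)
qed

lemma pprod_Sum: "pprod (SumGrp D) a n = pprod (ProdGrp D) a n"
  by (induction n) (simp_all add: SumGrp_def)

lemma pprod_coord: "pprod (ProdGrp D) a n i = pprod (D i) (\<lambda>k. a k i) n"
  by (induction n) (simp_all add: ProdGrp_def)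

lemma natpow_Sum: "x [^]\<^bsub>SumGrp D\<^esub> (n::nat) = x [^]\<^bsub>ProdGrp D\<^esub> n"
  by (induction n) (simp_all add: SumGrp_def)

lemma natpow_coord: "(x [^]\<^bsub>ProdGrp D\<^esub> (n::nat)) i = x i [^]\<^bsub>D i\<^esub> n"
  by (induction n) (simp_all add: ProdGrp_def)

lemma ProdGrp_carrier: "x \<in> carrier (ProdGrp D) \<longleftrightarrow> (\<forall>i. x i \<in> carrier (D i))"
  by (simp add: ProdGrp_def PiE_def Pi_iff)

lemma inv_coord:
  assumes grp: "\<And>i. group (D i)" and x: "x \<in> carrier (ProdGrp D)"
  shows "inv\<^bsub>ProdGrp D\<^esub> x = (\<lambda>i. inv\<^bsub>D i\<^esub> (x i))"
  unfolding m_inv_def[of "ProdGrp D"]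
proof (rule the_equality)
  have xi: "\<And>i. x i \<in> carrier (D i)" using x by (simp add: ProdGrp_carrier)
  show "(\<lambda>i. inv\<^bsub>D i\<^esub> (x i)) \<in> carrier (ProdGrp D) \<and>
    x \<otimes>\<^bsub>ProdGrp D\<^esub> (\<lambda>i. inv\<^bsub>D i\<^esub> (x i)) = \<one>\<^bsub>ProdGrp D\<^esub> \<and>
    (\<lambda>i. inv\<^bsub>D i\<^esub> (x i)) \<otimes>\<^bsub>ProdGrp D\<^esub> x = \<one>\<^bsub>ProdGrp D\<^esub>"
  proof (intro conjI)
    show "(\<lambda>i. inv\<^bsub>D i\<^esub> (x i)) \<in> carrier (ProdGrp D)"
      unfolding ProdGrp_carrier using group.inv_closed[OF grp xi] by blast
    show "x \<otimes>\<^bsub>ProdGrp D\<^esub> (\<lambda>i. inv\<^bsub>D i\<^esub> (x i)) = \<one>\<^bsub>ProdGrp D\<^esub>"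
      unfolding ProdGrp_def using group.r_inv[OF grp xi] by simp
    show "(\<lambda>i. inv\<^bsub>D i\<^esub> (x i)) \<otimes>\<^bsub>ProdGrp D\<^esub> x = \<one>\<^bsub>ProdGrp D\<^esub>"
      unfolding ProdGrp_def using group.l_inv[OF grp xi] by simp
  qed
  fix y assume y: "y \<in> carrier (ProdGrp D) \<and> x \<otimes>\<^bsub>ProdGrp D\<^esub> y = \<one>\<^bsub>ProdGrp D\<^esub> \<and>
    y \<otimes>\<^bsub>ProdGrp D\<^esub> x = \<one>\<^bsub>ProdGrp D\<^esub>"
  show "y = (\<lambda>i. inv\<^bsub>D i\<^esub> (x i))"
  proof
    fix i
    have yi: "y i \<in> carrier (D i)" using y by (simp add: ProdGrp_carrier)
    have "(y \<otimes>\<^bsub>ProdGrp D\<^esub> x) i = \<one>\<^bsub>ProdGrp D\<^esub> i"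
      using y by simp
    then have yx: "y i \<otimes>\<^bsub>D i\<^esub> x i = \<one>\<^bsub>D i\<^esub>"
      by (simp add: ProdGrp_def)
    show "y i = inv\<^bsub>D i\<^esub> (x i)"
      using group.inv_equality[OF grp yx xi yi, symmetric] .
  qed
qed

lemma intpow_coord:
  assumes grp: "\<And>i. group (D i)" and x: "x \<in> carrier (ProdGrp D)"
  shows "(x [^]\<^bsub>ProdGrp D\<^esub> (z::int)) i = x i [^]\<^bsub>D i\<^esub> z"
proof (cases "z < 0")
  case True
  have xi: "\<And>i. x i \<in> carrier (D i)" using x by (simp add: ProdGrp_carrier)
  have "\<And>j. (x [^]\<^bsub>ProdGrp D\<^esub> (nat (-z))) j \<in> carrier (D j)"
    unfolding natpow_coord using monoid.nat_pow_closed[OF group.is_monoid[OF grp] xi] .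
  then have c: "x [^]\<^bsub>ProdGrp D\<^esub> (nat (-z)) \<in> carrier (ProdGrp D)"
    by (subst ProdGrp_carrier) blast
  have "(x [^]\<^bsub>ProdGrp D\<^esub> z) = inv\<^bsub>ProdGrp D\<^esub> (x [^]\<^bsub>ProdGrp D\<^esub> (nat (-z)))"
    by (simp only: int_pow_def2 True if_True)
  also have "\<dots> = (\<lambda>j. inv\<^bsub>D j\<^esub> ((x [^]\<^bsub>ProdGrp D\<^esub> (nat (-z))) j))"
    by (rule inv_coord[OF grp c])
  finally have "(x [^]\<^bsub>ProdGrp D\<^esub> z) i = inv\<^bsub>D i\<^esub> ((x [^]\<^bsub>ProdGrp D\<^esub> (nat (-z))) i)"
    by (rule fun_cong)
  also have "\<dots> = inv\<^bsub>D i\<^esub> (x i [^]\<^bsub>D i\<^esub> (nat (-z)))"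
    by (simp only: natpow_coord)
  also have "\<dots> = x i [^]\<^bsub>D i\<^esub> z"
    by (simp only: int_pow_def2 True if_True)
  finally show ?thesis .
next
  case False
  then show ?thesis by (simp only: int_pow_def2 natpow_coord False if_False)
qed


lemma pprod_closed:
  assumes "monoid G" "\<And>k. a k \<in> carrier G"
  shows "pprod G a n \<in> carrier G"
  by (induction n) (simp_all add: assms monoid.one_closed monoid.m_closed)

lemma pprod_stable_add:
  assumes G: "monoid G" and c: "\<And>k. a k \<in> carrier G" and e: "\<And>k. k \<ge> N \<Longrightarrow> a k = \<one>\<^bsub>G\<^esub>"
  shows "pprod G a (N + d) = pprod G a N"
proof (induction d)
  case 0 then show ?case by simp
next
  case (Suc d)
  have "pprod G a (N + Suc d) = pprod G a (N + d) \<otimes>\<^bsub>G\<^esub> a (N + d)" by simp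
  also have "\<dots> = pprod G a (N + d)"
    using e[of "N + d"] monoid.r_one[OF G pprod_closed[OF G c]] by simp
  finally show ?case using Suc by simp
qed

lemma pprod_stable:
  assumes G: "monoid G" and c: "\<And>k. a k \<in> carrier G" and e: "\<And>k. k \<ge> N \<Longrightarrow> a k = \<one>\<^bsub>G\<^esub>"
    and n: "n \<ge> N"
  shows "pprod G a n = pprod G a N"
proof -
  have "pprod G a (N + (n - N)) = pprod G a N" by (rule pprod_stable_add[OF G c e])
  then show ?thesis using n by simp
qed

lemma pprod_single:
  assumes G: "monoid G" and x: "x \<in> carrier G" and a: "\<And>k. a k = (if k = p then x else \<one>\<^bsub>G\<^esub>)"
  shows "pprod G a n = (if p < n then x else \<one>\<^bsub>G\<^esub>)"
proof (induction n)
  case 0 then show ?case by simp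
next
  case (Suc n)
  show ?case
  proof (cases "p < n")
    case True
    then show ?thesis using Suc a[of n] monoid.r_one[OF G x] by simp
  next
    case False
    then show ?thesis using Suc a[of n] monoid.l_one[OF G x] monoid.l_one[OF G monoid.one_closed[OF G]]
      by (cases "p = n") simp_all
  qed
qed

lemma part1:
  fixes D :: "nat \<Rightarrow> 'a monoid"
  assumes grp: "\<And>i. group (D i)" and gc: "\<And>n. g n \<in> carrier (ProdGrp D)"
    and lim: "limitin (ProdTop D) g \<one>\<^bsub>ProdGrp D\<^esub> sequentially"
  shows "hyper_multipliable (ProdGrp D) (ProdTop D) g \<and> hyper_converging (ProdGrp D) (ProdTop D) g"
proof -
  have gi: "\<And>n i. g n i \<in> carrier (D i)" using gc by (simp add: ProdGrp_carrier)
  have "\<forall>i. \<exists>N. \<forall>n\<ge>N. g n i = \<one>\<^bsub>D i\<^esub>"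
  proof
    fix i
    from limitin_ProdTopD[OF lim] have "eventually (\<lambda>n. g n i = \<one>\<^bsub>ProdGrp D\<^esub> i) sequentially"
      by blast
    then show "\<exists>N. \<forall>n\<ge>N. g n i = \<one>\<^bsub>D i\<^esub>" by (simp add: eventually_sequentially ProdGrp_def)
  qed
  then obtain N where N: "\<And>i n. n \<ge> N i \<Longrightarrow> g n i = \<one>\<^bsub>D i\<^esub>" by metis
  have hm: "hyper_multipliable (ProdGrp D) (ProdTop D) g"
    unfolding hyper_multipliable_def
  proof
    fix m :: "nat \<Rightarrow> int"
    define a where "a k = g k [^]\<^bsub>ProdGrp D\<^esub> m k" for k
    have ai: "\<And>k i. a k i = g k i [^]\<^bsub>D i\<^esub> m k" unfolding a_def using intpow_coord[OF grp gc] .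
    have ac: "\<And>k i. a k i \<in> carrier (D i)" unfolding ai using group.int_pow_closed[OF grp gi] .
    have a1: "\<And>k i. k \<ge> N i \<Longrightarrow> a k i = \<one>\<^bsub>D i\<^esub>" unfolding ai using N group.int_pow_one[OF grp] by simp
    define l where "l i = pprod (D i) (\<lambda>k. a k i) (N i)" for i
    have "limitin (ProdTop D) (\<lambda>n. pprod (ProdGrp D) a n) l sequentially"
    proof (rule limitin_ProdTopI)
      fix n i show "pprod (ProdGrp D) a n i \<in> carrier (D i)"
        unfolding pprod_coord using pprod_closed[OF group.is_monoid[OF grp] ac] .
    next
      fix i show "l i \<in> carrier (D i)"
        unfolding l_def using pprod_closed[OF group.is_monoid[OF grp] ac] .
    next
      fix i show "eventually (\<lambda>n. pprod (ProdGrp D) a n i = l i) sequentially"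
        unfolding pprod_coord l_def eventually_sequentially
      proof (intro exI[of _ "N i"] allI impI)
        fix n assume ni: "n \<ge> N i"
        show "pprod (D i) (\<lambda>k. a k i) n = pprod (D i) (\<lambda>k. a k i) (N i)"
          by (rule pprod_stable[where G="D i" and a="\<lambda>k. a k i" and N="N i"])
             (simp_all add: ac a1 group.is_monoid[OF grp] ni)
      qed
    qed
    then show "\<exists>l. limitin (ProdTop D) (\<lambda>n. pprod (ProdGrp D) (\<lambda>k. g k [^]\<^bsub>ProdGrp D\<^esub> m k) n) l sequentially"
      unfolding a_def by blast
  qed
  have hc: "hyper_converging (ProdGrp D) (ProdTop D) g"
    unfolding hyper_converging_def
  proof
    fix m :: "nat \<Rightarrow> int"
    show "limitin (ProdTop D) (\<lambda>n. g n [^]\<^bsub>ProdGrp D\<^esub> m n) \<one>\<^bsub>ProdGrp D\<^esub> sequentially"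
    proof (rule limitin_ProdTopI)
      fix n i show "(g n [^]\<^bsub>ProdGrp D\<^esub> m n) i \<in> carrier (D i)"
        unfolding intpow_coord[OF grp gc] using group.int_pow_closed[OF grp gi] .
    next
      fix i show "\<one>\<^bsub>ProdGrp D\<^esub> i \<in> carrier (D i)"
        using monoid.one_closed[OF group.is_monoid[OF grp]] by (simp add: ProdGrp_def)
    next
      fix i show "eventually (\<lambda>n. (g n [^]\<^bsub>ProdGrp D\<^esub> m n) i = \<one>\<^bsub>ProdGrp D\<^esub> i) sequentially"
        unfolding intpow_coord[OF grp gc] eventually_sequentially
        using N group.int_pow_one[OF grp] by (intro exI[of _ "N i"]) (auto simp: ProdGrp_def)
    qed
  qed
  show ?thesis using hm hc by blast
qed


lemma sum_term_coord:
  assumes grp: "\<And>i. group (D i)" and x: "\<And>i. x i \<in> carrier (D i)"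
  shows "(x [^]\<^bsub>SumGrp D\<^esub> (if b then 1 else 0 :: int)) i = (if b then x i else \<one>\<^bsub>D i\<^esub>)"
proof (cases b)
  case True
  have "x [^]\<^bsub>SumGrp D\<^esub> (int (Suc 0)) = x [^]\<^bsub>SumGrp D\<^esub> (Suc 0)"
    by (rule int_pow_int)
  then have "(x [^]\<^bsub>SumGrp D\<^esub> (int (Suc 0))) i = (x [^]\<^bsub>ProdGrp D\<^esub> (Suc 0)) i"
    by (simp only: natpow_Sum)
  also have "\<dots> = x i [^]\<^bsub>D i\<^esub> (Suc 0)" by (rule natpow_coord)
  also have "\<dots> = x i"
    using monoid.l_one[OF group.is_monoid[OF grp] x] by simp
  finally show ?thesis using True by simp
next
  case False
  then show ?thesis by (simp add: SumGrp_def ProdGrp_def)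
qed

lemma part2:
  fixes D :: "nat \<Rightarrow> 'a monoid"
  assumes grp: "\<And>i. group (D i)" and gc: "\<And>n. g n \<in> carrier (SumGrp D)"
    and sm: "super_multipliable (SumGrp D) (SumTop D) g"
  shows "eventually_neutral (SumGrp D) g"
proof (rule ccontr)
  assume ne: "\<not> eventually_neutral (SumGrp D) g"
  have mon: "\<And>i. monoid (D i)" using grp group.is_monoid by blast
  have gF: "\<And>n. g n \<in> FinSupp D" using gc by (simp add: SumGrp_def)
  have gi: "\<And>n i. g n i \<in> carrier (D i)" using gF by (simp add: FinSupp_def ProdGrp_carrier)
  have fin: "\<And>n. finite {i. g n i \<noteq> \<one>\<^bsub>D i\<^esub>}" using gF by (simp add: FinSupp_def)
  have unb: "\<And>M. \<exists>n\<ge>M. \<exists>i. g n i \<noteq> \<one>\<^bsub>D i\<^esub>"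
  proof -
    fix M
    have "infinite {n. g n \<noteq> \<one>\<^bsub>SumGrp D\<^esub>}" using ne by (simp add: eventually_neutral_def)
    then obtain n where n: "n \<ge> M" "g n \<noteq> \<one>\<^bsub>SumGrp D\<^esub>"
      unfolding infinite_nat_iff_unbounded_le by blast
    then have "\<exists>i. g n i \<noteq> \<one>\<^bsub>D i\<^esub>" by (auto simp: SumGrp_def ProdGrp_def)
    with n show "\<exists>n\<ge>M. \<exists>i. g n i \<noteq> \<one>\<^bsub>D i\<^esub>" by blast
  qed
  define PS where "PS S n i = pprod (D i) (\<lambda>k. if k \<in> S then g k i else \<one>\<^bsub>D i\<^esub>) n"
    for S :: "nat set" and n i
  have limS: "\<And>S. \<exists>l. l \<in> FinSupp D \<and> (\<forall>i. \<exists>N. \<forall>n\<ge>N. PS S n i = l i)"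
  proof -
    fix S :: "nat set"
    let ?m = "\<lambda>k. if k \<in> S then 1 else (0::int)"
    have m01: "\<forall>k. ?m k \<in> {0,1}" by simp
    have "(\<forall>k. ?m k \<in> {0,1}) \<longrightarrow> (\<exists>l. limitin (SumTop D)
        (\<lambda>n. pprod (SumGrp D) (\<lambda>k. g k [^]\<^bsub>SumGrp D\<^esub> ?m k) n) l sequentially)"
      using sm unfolding super_multipliable_def by (rule spec)
    then obtain l where l: "limitin (SumTop D)
        (\<lambda>n. pprod (SumGrp D) (\<lambda>k. g k [^]\<^bsub>SumGrp D\<^esub> ?m k) n) l sequentially"
      using m01 by (elim impE exE)
    have eq: "\<And>n i. pprod (SumGrp D) (\<lambda>k. g k [^]\<^bsub>SumGrp D\<^esub> ?m k) n i = PS S n i"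
      by (simp only: pprod_Sum pprod_coord PS_def sum_term_coord[OF grp gi])
    from l have lF: "l \<in> FinSupp D"
      and l2: "limitin (ProdTop D) (\<lambda>n. pprod (SumGrp D) (\<lambda>k. g k [^]\<^bsub>SumGrp D\<^esub> ?m k) n) l sequentially"
      unfolding SumTop_def limitin_subtopology by auto
    have "\<forall>i. \<exists>N. \<forall>n\<ge>N. PS S n i = l i"
      using limitin_ProdTopD[OF l2] unfolding eq eventually_sequentially by blast
    with lF show "\<exists>l. l \<in> FinSupp D \<and> (\<forall>i. \<exists>N. \<forall>n\<ge>N. PS S n i = l i)" by blast
  qed
  have PSc: "\<And>S n i. PS S n i \<in> carrier (D i)"
    unfolding PS_def by (rule pprod_closed[OF mon]) (simp add: gi monoid.one_closed[OF mon])
  obtain l0 where l0: "\<forall>i. \<exists>N. \<forall>n\<ge>N. PS UNIV n i = l0 i" using limS by blast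
  have "\<forall>i. \<exists>N. \<forall>n\<ge>N. g n i = \<one>\<^bsub>D i\<^esub>"
  proof
    fix i
    obtain N0 where N0: "\<forall>n\<ge>N0. PS UNIV n i = l0 i" using l0 by blast
    show "\<exists>N. \<forall>n\<ge>N. g n i = \<one>\<^bsub>D i\<^esub>"
    proof (intro exI[of _ N0] allI impI)
      fix n assume "n \<ge> N0"
      then have "PS UNIV (Suc n) i = PS UNIV n i" using N0 by simp
      then have "PS UNIV n i \<otimes>\<^bsub>D i\<^esub> g n i = PS UNIV n i" by (simp add: PS_def)
      then show "g n i = \<one>\<^bsub>D i\<^esub>" using group.l_cancel_one[OF grp PSc gi] by blast
    qed
  qed
  then obtain N where N: "\<And>i n. n \<ge> N i \<Longrightarrow> g n i = \<one>\<^bsub>D i\<^esub>" by metis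
  define Good where "Good b n \<longleftrightarrow> b < n \<and> (\<exists>i. g n i \<noteq> \<one>\<^bsub>D i\<^esub>) \<and>
      (\<forall>i. (\<exists>p\<le>b. g p i \<noteq> \<one>\<^bsub>D i\<^esub>) \<longrightarrow> (\<forall>q\<ge>n. g q i = \<one>\<^bsub>D i\<^esub>))" for b n
  have exG: "\<And>b. \<exists>n. Good b n"
  proof -
    fix b
    define F where "F = (\<Union>p\<le>b. {i. g p i \<noteq> \<one>\<^bsub>D i\<^esub>})"
    have "finite F" using fin by (simp add: F_def)
    define M where "M = Max (insert (Suc b) (N ` F))"
    have M1: "Suc b \<le> M" using \<open>finite F\<close> by (simp add: M_def)
    have M2: "\<And>i. i \<in> F \<Longrightarrow> N i \<le> M" using \<open>finite F\<close> by (simp add: M_def)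
    obtain n i where n: "n \<ge> M" "g n i \<noteq> \<one>\<^bsub>D i\<^esub>" using unb by blast
    have "Good b n" unfolding Good_def
    proof (intro conjI allI impI)
      show "b < n" using M1 n by simp
      show "\<exists>i. g n i \<noteq> \<one>\<^bsub>D i\<^esub>" using n by blast
    next
      fix i' q assume "\<exists>p\<le>b. g p i' \<noteq> \<one>\<^bsub>D i'\<^esub>" "n \<le> q"
      then have "i' \<in> F" by (auto simp: F_def)
      then have "N i' \<le> q" using M2 n \<open>n \<le> q\<close> by fastforce
      then show "g q i' = \<one>\<^bsub>D i'\<^esub>" by (rule N)
    qed
    then show "\<exists>n. Good b n" by blast
  qed
  define K where "K = rec_nat (LEAST n. \<exists>i. g n i \<noteq> \<one>\<^bsub>D i\<^esub>) (\<lambda>_ b. LEAST n. Good b n)"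
  have K0: "K 0 = (LEAST n. \<exists>i. g n i \<noteq> \<one>\<^bsub>D i\<^esub>)" by (simp add: K_def)
  have KSuc: "\<And>j. K (Suc j) = (LEAST n. Good (K j) n)" by (simp add: K_def)
  have KS: "\<And>j. Good (K j) (K (Suc j))" unfolding KSuc using exG by (rule LeastI_ex)
  have Knz: "\<And>j. \<exists>i. g (K j) i \<noteq> \<one>\<^bsub>D i\<^esub>"
  proof -
    fix j show "\<exists>i. g (K j) i \<noteq> \<one>\<^bsub>D i\<^esub>"
    proof (cases j)
      case 0
      have "\<exists>n i. g n i \<noteq> \<one>\<^bsub>D i\<^esub>" using unb by blast
      then show ?thesis unfolding 0 K0 by (rule LeastI_ex)
    next
      case (Suc j') then show ?thesis using KS[of j'] by (simp add: Good_def)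
    qed
  qed
  have smK: "strict_mono K" unfolding strict_mono_Suc_iff using KS by (simp add: Good_def)
  have disj: "\<And>j j' i. j < j' \<Longrightarrow> g (K j) i \<noteq> \<one>\<^bsub>D i\<^esub> \<Longrightarrow> g (K j') i = \<one>\<^bsub>D i\<^esub>"
  proof -
    fix j j' i assume jj: "j < j'" and gne: "g (K j) i \<noteq> \<one>\<^bsub>D i\<^esub>"
    then obtain j'' where j': "j' = Suc j''" and "j \<le> j''" by (cases j') auto
    then have "K j \<le> K j''" using smK strict_mono_leD by blast
    with KS[of j''] gne show "g (K j') i = \<one>\<^bsub>D i\<^esub>" unfolding Good_def j' by blast
  qed
  obtain l where lF: "l \<in> FinSupp D" and ll: "\<forall>i. \<exists>N. \<forall>n\<ge>N. PS (range K) n i = l i"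
    using limS by blast
  have supp: "\<And>j i. g (K j) i \<noteq> \<one>\<^bsub>D i\<^esub> \<Longrightarrow> l i = g (K j) i"
  proof -
    fix j i assume gne: "g (K j) i \<noteq> \<one>\<^bsub>D i\<^esub>"
    have seq: "\<And>k. (if k \<in> range K then g k i else \<one>\<^bsub>D i\<^esub>) =
        (if k = K j then g (K j) i else \<one>\<^bsub>D i\<^esub>)"
    proof -
      fix k show "(if k \<in> range K then g k i else \<one>\<^bsub>D i\<^esub>) =
        (if k = K j then g (K j) i else \<one>\<^bsub>D i\<^esub>)"
      proof (cases "k \<in> range K")
        case True
        then obtain j' where k: "k = K j'" by blast
        consider "j' < j" | "j' = j" | "j < j'" by arith
        then show ?thesis
        proof cases
          case 1
          then have "g (K j') i = \<one>\<^bsub>D i\<^esub>" using disj gne by blast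
          moreover have "K j' \<noteq> K j" using 1 smK by (simp add: strict_mono_eq)
          ultimately show ?thesis using k by simp
        next
          case 2 then show ?thesis using k by simp
        next
          case 3
          then have "g (K j') i = \<one>\<^bsub>D i\<^esub>" using disj gne by blast
          moreover have "K j' \<noteq> K j" using 3 smK by (simp add: strict_mono_eq)
          ultimately show ?thesis using k by simp
        qed
      next
        case False
        then have "k \<noteq> K j" by blast
        with False show ?thesis by simp
      qed
    qed
    have PSeq: "\<And>n. PS (range K) n i = (if K j < n then g (K j) i else \<one>\<^bsub>D i\<^esub>)"
      unfolding PS_def by (rule pprod_single[OF mon gi seq])
    obtain N0 where N0: "\<forall>n\<ge>N0. PS (range K) n i = l i" using ll by blast
    have "PS (range K) (max N0 (Suc (K j))) i = l i" using N0 by simp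
    then show "l i = g (K j) i" by (simp add: PSeq less_max_iff_disj)
  qed
  define ii where "ii j = (SOME i. g (K j) i \<noteq> \<one>\<^bsub>D i\<^esub>)" for j
  have iiP: "\<And>j. g (K j) (ii j) \<noteq> \<one>\<^bsub>D (ii j)\<^esub>"
    unfolding ii_def using Knz by (rule someI_ex)
  have inj: "inj ii"
  proof (rule injI)
    fix j j' assume eq: "ii j = ii j'"
    show "j = j'"
    proof (rule ccontr)
      assume "j \<noteq> j'"
      then consider "j < j'" | "j' < j" by arith
      then show False
      proof cases
        case 1 then show False using disj[OF 1 iiP[of j]] iiP[of j'] eq by simp
      next
        case 2 then show False using disj[OF 2 iiP[of j']] iiP[of j] eq by simp
      qed
    qed
  qed
  have "range ii \<subseteq> {i. l i \<noteq> \<one>\<^bsub>D i\<^esub>}"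
  proof
    fix i assume "i \<in> range ii"
    then obtain j where j: "i = ii j" by blast
    have "l i = g (K j) i" using supp iiP[of j] j by blast
    then show "i \<in> {i. l i \<noteq> \<one>\<^bsub>D i\<^esub>}" using iiP[of j] j by simp
  qed
  moreover have "finite {i. l i \<noteq> \<one>\<^bsub>D i\<^esub>}" using lF by (simp add: FinSupp_def)
  ultimately have "finite (range ii)" by (rule finite_subset)
  then have "finite (UNIV :: nat set)" using inj finite_imageD by blast
  then show False by simp
qed


theorem proposition2p4:
  fixes D :: "nat \<Rightarrow> 'a monoid"
  assumes grp: "\<And>i. group (D i)"
    and nontriv: "\<And>i. \<exists>x \<in> carrier (D i). x \<noteq> \<one>\<^bsub>D i\<^esub>"
  shows "(\<forall>g. (\<forall>n. g n \<in> carrier (ProdGrp D)) \<and>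
              limitin (ProdTop D) g \<one>\<^bsub>ProdGrp D\<^esub> sequentially \<longrightarrow>
            hyper_multipliable (ProdGrp D) (ProdTop D) g \<and>
            hyper_converging (ProdGrp D) (ProdTop D) g)
       \<and> (\<forall>g. (\<forall>n. g n \<in> carrier (SumGrp D)) \<and>
              super_multipliable (SumGrp D) (SumTop D) g \<longrightarrow>
            eventually_neutral (SumGrp D) g)
       \<and> (\<forall>g. (\<forall>n. g n \<in> carrier (SumGrp D)) \<and>
              hyper_multipliable (SumGrp D) (SumTop D) g \<longrightarrow>
            eventually_neutral (SumGrp D) g)"
proof (intro conjI allI impI)
  fix g :: "nat \<Rightarrow> nat \<Rightarrow> 'a"
  assume a: "(\<forall>n. g n \<in> carrier (ProdGrp D)) \<and> limitin (ProdTop D) g \<one>\<^bsub>ProdGrp D\<^esub> sequentially"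
  have r: "hyper_multipliable (ProdGrp D) (ProdTop D) g \<and> hyper_converging (ProdGrp D) (ProdTop D) g"
    using part1[where D=D and g=g, OF grp] a by blast
  then show "hyper_multipliable (ProdGrp D) (ProdTop D) g" "hyper_converging (ProdGrp D) (ProdTop D) g"
    by blast+
next
  fix g :: "nat \<Rightarrow> nat \<Rightarrow> 'a"
  assume "(\<forall>n. g n \<in> carrier (SumGrp D)) \<and> super_multipliable (SumGrp D) (SumTop D) g"
  then show "eventually_neutral (SumGrp D) g" using part2[where D=D and g=g, OF grp] by blast
next
  fix g :: "nat \<Rightarrow> nat \<Rightarrow> 'a"
  assume h: "(\<forall>n. g n \<in> carrier (SumGrp D)) \<and> hyper_multipliable (SumGrp D) (SumTop D) g"
  then have "super_multipliable (SumGrp D) (SumTop D) g"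
    unfolding super_multipliable_def hyper_multipliable_def by blast
  then show "eventually_neutral (SumGrp D) g" using part2[where D=D and g=g, OF grp] h by blast
qed

end
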